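(* Let $n\ge 1$. Under the restriction map $H^\bullet(\Gamma_{n+1};\mathbb{Q}_{\mathrm{sgn}})\to H^\bullet(\Gamma_n;\mathbb{Q}_{\mathrm{sgn}})$ induced by the natural inclusion $\Gamma_n\hookrightarrow\Gamma_{n+1}$: if $\mathcal D\in\mathcal D^{\mathrm{sgn}}_{n+1}$ has exactly one isolated vertex, then $\alpha^{\mathrm{sgn}}_{\mathcal D}$ restricts to $\alpha^{\mathrm{sgn}}_{\mathcal D'}$, where $\mathcal D'\in\mathcal D^{\mathrm{sgn}}_n$ is obtained by deleting the isolated vertex; if $\mathcal D$ has no isolated vertex, $\alpha^{\mathrm{sgn}}_{\mathcal D}$ restricts to $0$. In particular the restriction map is injective on the subspace spanned by the classes $\alpha^{\mathrm{sgn}}_{\mathcal D}$ with $\mathcal D$ having exactly one isolated vertex.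
   Context: $\Gamma_n=\mathrm{Br}_n/[P_n,P_n]$, $\mathbb{Z}\mathcal A_n=P_n/[P_n,P_n]$. $\mathbb{Q}_{\mathrm{sgn}}$ is the sign representation of $S_n$ viewed as a $\Gamma_n$-module; $H^\bullet(\Gamma_n;\mathbb{Q}_{\mathrm{sgn}})$ is identified via restriction with $H^\bullet(\mathbb{Z}\mathcal A_n;\mathbb{Q}_{\mathrm{sgn}})^{S_n}$, and $H^\bullet(\mathbb{Z}\mathcal A_n;\mathbb{Q}_{\mathrm{sgn}})=\mathbb{Q}_{\mathrm{sgn}}\otimes\Lambda^\bullet$ where $\Lambda^\bullet$ is the exterior algebra on $\omega_{ij}$ ($1\le i<j\le n$) with $\sigma(\omega_{ij})=\omega_{\sigma(i)\sigma(j)}$ if $\sigma(i)<\sigma(j)$, $\omega_{\sigma(j)\sigma(i)}$ otherwise. The inclusion $\Gamma_n\hookrightarrow\Gamma_{n+1}$ comes from adding a strand; restriction sends $\omega_{ij}$ ($j\le n$) to $\omega_{ij}$ and $\omega_{i,n+1}$ to $0$. For a simple graph $\Delta$ on $\{1,\dots,n\}$ with lexicographically ordered edges $(i_1,j_1),\dots,(i_k,j_k)$, $\mu_\Delta=\omega_{i_1j_1}\cdots\omega_{i_kj_k}$. A graph with $n$ vertices is skew-invariant if every automorphism $\sigma$ satisfies $\mathrm{sgn}(\sigma)\mathrm{sgn}_\Delta(\sigma)=1$, with $\mathrm{sgn}(\sigma)$ the sign on vertices and $\mathrm{sgn}_\Delta(\sigma)$ the sign of the induced edge permutation; $\mathcal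 D^{\mathrm{sgn}}_n$ is the set of their isomorphism classes. Representatives are chosen coherently: for each class $\mathcal G_0$ without isolated vertices a representative on $\{1,\dots,|V\mathcal G_0|\}$ is fixed, and the representative $\Delta_{\mathcal D}$ of a class on $n$ vertices with non-isolated part $\mathcal G_0$ adds vertices $|V\mathcal G_0|+1,\dots,n$ as isolated vertices. $\alpha^{\mathrm{sgn}}_{\mathcal D}=\frac{1}{|\mathrm{Stab}_{S_n}(\Delta_{\mathcal D})|}\sum_{\sigma\in S_n}\sigma(\mu_{\Delta_{\mathcal D}})$ computed in $H^\bullet(\mathbb{Z}\mathcal A_n;\mathbb{Q}_{\mathrm{sgn}})$; these classes for $\mathcal D\in\mathcal D^{\mathrm{sgn}}_n$ form a basis of $H^\bullet(\Gamma_n;\mathbb{Q}_{\mathrm{sgn}})$. *)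

theory Defs
  imports Complex_Main "HOL-Combinatorics.Permutations"
begin

text \<open>Graphs are encoded by their edge sets: an edge is a pair (i,j) with 1 \<le> i < j.
  Vertices are 1..n. Elements of the exterior algebra on the generators omega_ij
  (1 \<le> i < j \<le> n) with rational coefficients are coefficient functions on
  edge sets S, S standing for the monomial mu_S (edges multiplied in lexicographic order).\<close>

definition edges :: "nat \<Rightarrow> (nat \<times> nat) set" where
  "edges n = {(i,j). 1 \<le> i \<and> i < j \<and> j \<le> n}"

definition simple_edges :: "(nat \<times> nat) set \<Rightarrow> bool" where
  "simple_edges E \<longleftrightarrow> finite E \<and> (\<forall>(i,j)\<in>E. 1 \<le> i \<and> i < j)"

definition verts :: "(nat \<times> nat) set \<Rightarrow> nat set" where
  "verts E = fst ` E \<union> snd ` E"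

definition emap :: "(nat \<Rightarrow> nat) \<Rightarrow> nat \<times> nat \<Rightarrow> nat \<times> nat" where
  "emap \<sigma> e = (min (\<sigma> (fst e)) (\<sigma> (snd e)), max (\<sigma> (fst e)) (\<sigma> (snd e)))"

definition lexless :: "nat \<times> nat \<Rightarrow> nat \<times> nat \<Rightarrow> bool" where
  "lexless e e' \<longleftrightarrow> fst e < fst e' \<or> (fst e = fst e' \<and> snd e < snd e')"

text \<open>number of inversions created when the lexicographically ordered edges of S are mapped by sigma;
  sigma(mu_S) = (-1)^inversions * mu_(sigma S) in the exterior algebra\<close>
definition inversions :: "(nat \<Rightarrow> nat) \<Rightarrow> (nat \<times> nat) set \<Rightarrow> nat" where
  "inversions \<sigma> S = card {(e,e'). e \<in> S \<and> e' \<in> S \<and> lexless e e' \<and> lexless (emap \<sigma> e') (emap \<sigma> e)}"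

definition perms :: "nat \<Rightarrow> (nat \<Rightarrow> nat) set" where
  "perms n = {\<sigma>. \<sigma> permutes {1..n}}"

definition stab :: "nat \<Rightarrow> (nat \<times> nat) set \<Rightarrow> (nat \<Rightarrow> nat) set" where
  "stab n E = {\<sigma> \<in> perms n. emap \<sigma> ` E = E}"

definition edge_perm :: "(nat \<Rightarrow> nat) \<Rightarrow> (nat \<times> nat) set \<Rightarrow> nat \<times> nat \<Rightarrow> nat \<times> nat" where
  "edge_perm \<sigma> E e = (if e \<in> E then emap \<sigma> e else e)"

definition skew_invariant :: "nat \<Rightarrow> (nat \<times> nat) set \<Rightarrow> bool" where
  "skew_invariant n E \<longleftrightarrow> E \<subseteq> edges n \<and>
     (\<forall>\<sigma> \<in> stab n E. sign \<sigma> * sign (edge_perm \<sigma> E) = 1)"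

text \<open>action of sigma in S_n on the basis element mu_S of Q_sgn tensor Lambda (diagonal action)\<close>
definition act_coeff :: "(nat \<Rightarrow> nat) \<Rightarrow> (nat \<times> nat) set \<Rightarrow> rat" where
  "act_coeff \<sigma> S = of_int (sign \<sigma>) * (-1) ^ inversions \<sigma> S"

text \<open>alpha^sgn for the representative graph with edge set S on n vertices,
  as an element of Q_sgn tensor Lambda (coefficient of mu_T)\<close>
definition alpha :: "nat \<Rightarrow> (nat \<times> nat) set \<Rightarrow> (nat \<times> nat) set \<Rightarrow> rat" where
  "alpha n S T = (1 / of_nat (card (stab n S))) *
     (\<Sum>\<sigma>\<in>perms n. if emap \<sigma> ` S = T then act_coeff \<sigma> S else 0)"

text \<open>restriction from n+1 strands to n strands: omega_ij \<mapsto> omega_ij (j \<le> n), omega_{i,n+1} \<mapsto> 0\<close>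
definition res :: "nat \<Rightarrow> ((nat \<times> nat) set \<Rightarrow> rat) \<Rightarrow> (nat \<times> nat) set \<Rightarrow> rat" where
  "res n f T = (if T \<subseteq> edges n then f T else 0)"

definition iso_graphs :: "(nat \<times> nat) set \<Rightarrow> (nat \<times> nat) set \<Rightarrow> bool" where
  "iso_graphs E F \<longleftrightarrow> (\<exists>f. bij_betw f (verts E) (verts F) \<and> emap f ` E = F)"

text \<open>coherent choice of representatives: to every graph without isolated vertices
  (given by its edge set) rep assigns a representative of its isomorphism class on the
  vertex set 1..k, depending only on the isomorphism class. The representative of a class
  on n vertices is then rep E with vertices k+1..n isolated (same edge set).\<close>
definition coherent_rep :: "((nat \<times> nat) set \<Rightarrow> (nat \<times> nat) set) \<Rightarrow> bool" where
  "coherent_rep rep \<longleftrightarrow> (\<forall>E. simple_edges E \<longrightarrow>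
      simple_edges (rep E) \<and> verts (rep E) = {1..card (verts E)} \<and> iso_graphs E (rep E) \<and>
      (\<forall>F. simple_edges F \<and> iso_graphs E F \<longrightarrow> rep F = rep E))"

end

theory Submission
  imports Defs "HOL-Library.Product_Lexorder"
begin

definition sr :: "'a::linorder \<Rightarrow> 'a \<Rightarrow> int" where
  "sr a b = (if a < b then 1 else -1)"

definition prs :: "'a::linorder set \<Rightarrow> ('a \<times> 'a) set" where
  "prs S = {(x,y). x \<in> S \<and> y \<in> S \<and> x < y}"

definition eps :: "'a::linorder set \<Rightarrow> ('a \<Rightarrow> 'a) \<Rightarrow> int" where
  "eps S p = (\<Prod>z\<in>prs S. sr (p (fst z)) (p (snd z)))"

definition ninv :: "'a::linorder set \<Rightarrow> ('a \<Rightarrow> 'a) \<Rightarrow> nat" where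
  "ninv S p = card {(x,y). x \<in> S \<and> y \<in> S \<and> x < y \<and> p y < p x}"

lemma finite_prs: "finite S \<Longrightarrow> finite (prs S)"
  by (rule finite_subset[of _ "S \<times> S"]) (auto simp: prs_def)

lemma prod_pm1:
  assumes "finite A"
  shows "(\<Prod>z\<in>A. (if Q z then 1 else -1 :: int)) = (-1) ^ card {z\<in>A. \<not> Q z}"
proof -
  have "(\<Prod>z\<in>A. (if Q z then 1 else -1 :: int)) = prod (\<lambda>_. 1) (A \<inter> {z. Q z}) * prod (\<lambda>_. -1) (A \<inter> - {z. Q z})"
    by (rule prod.If_cases[OF assms])
  also have "\<dots> = (-1) ^ card (A \<inter> - {z. Q z})" by simp
  also have "A \<inter> - {z. Q z} = {z\<in>A. \<not> Q z}" by auto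
  finally show ?thesis .
qed

lemma eps_ninv:
  assumes "finite S" "p permutes S"
  shows "eps S p = (-1) ^ ninv S p"
proof -
  have "eps S p = (\<Prod>z\<in>prs S. (if p (fst z) < p (snd z) then 1 else -1))"
    unfolding eps_def sr_def by simp
  also have "\<dots> = (-1) ^ card {z\<in>prs S. \<not> p (fst z) < p (snd z)}"
    by (rule prod_pm1[OF finite_prs[OF assms(1)]])
  also have "{z\<in>prs S. \<not> p (fst z) < p (snd z)} = {(x,y). x \<in> S \<and> y \<in> S \<and> x < y \<and> p y < p x}"
  proof -
    have "inj p" using assms(2) by (rule permutes_inj)
    then show ?thesis unfolding prs_def
      by (auto simp: inj_eq) (metis linorder_neqE less_irrefl inj_eq)
  qed
  finally show ?thesis unfolding ninv_def .
qed

lemma eps_comp: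
  assumes "finite S" "p permutes S" "q permutes S"
  shows "eps S (p \<circ> q) = eps S p * eps S q"
proof -
  define m where "m = (\<lambda>z. (min (q (fst z)) (q (snd z)), max (q (fst z)) (q (snd z))))"
  define g where "g = (\<lambda>w. sr (p (fst w)) (p (snd w)))"
  have ip: "inj p" and iq: "inj q" using assms permutes_inj by auto
  have qS: "\<And>x. x \<in> S \<Longrightarrow> q x \<in> S" by (simp add: permutes_in_image[OF assms(3)])
  have pw: "sr (p (q (fst z))) (p (q (snd z))) = sr (q (fst z)) (q (snd z)) * g (m z)"
    if zP: "z \<in> prs S" for z
  proof -
    obtain x y where z: "z = (x,y)" "x < y" using zP unfolding prs_def by auto
    have "q x \<noteq> q y" using iq z(2) by (simp add: inj_eq)
    moreover have "p (q x) \<noteq> p (q y)" using ip calculation by (simp add: inj_eq)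
    ultimately show ?thesis unfolding z g_def m_def sr_def
      by (cases "q x < q y") auto
  qed
  have bij: "bij_betw m (prs S) (prs S)"
  proof (rule bij_betw_imageI)
    show "inj_on m (prs S)"
    proof (rule inj_onI)
      fix z w assume z: "z \<in> prs S" and w: "w \<in> prs S" and e: "m z = m w"
      obtain x y where xy: "z = (x,y)" "x < y" using z unfolding prs_def by auto
      obtain x' y' where xy': "w = (x',y')" "x' < y'" using w unfolding prs_def by auto
      have e1: "min (q x) (q y) = min (q x') (q y')" "max (q x) (q y) = max (q x') (q y')"
        using e unfolding xy xy' m_def by simp_all
      have mm: "\<And>a b::'a. {a,b} = {min a b, max a b}" by (auto simp: min_def max_def)
      have "{q x, q y} = {q x', q y'}" using e1 mm by metis
      then have "q ` {x,y} = q ` {x',y'}" by simp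
      then have "{x,y} = {x',y'}" using iq by (metis inj_image_eq_iff image_empty image_insert)
      then show "z = w" using xy xy' by (auto simp: doubleton_eq_iff)
    qed
    show "m ` prs S = prs S"
    proof
      show "m ` prs S \<subseteq> prs S"
      proof
        fix w assume "w \<in> m ` prs S"
        then obtain x y where w: "w = m (x,y)" and xy: "x \<in> S" "y \<in> S" "x < y" unfolding prs_def by auto
        have "q x \<noteq> q y" using iq xy(3) by (simp add: inj_eq)
        then show "w \<in> prs S" unfolding w m_def prs_def using qS xy
          by (auto simp: min_def max_def)
      qed
      show "prs S \<subseteq> m ` prs S"
      proof
        fix w assume "w \<in> prs S"
        then obtain a b where w: "w = (a,b)" and ab: "a \<in> S" "b \<in> S" "a < b" unfolding prs_def by auto
        define x where "x = inv q a"
        define y where "y = inv q b"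
        have qx: "q x = a" "q y = b" unfolding x_def y_def using assms(3)
          by (simp_all add: permutes_inverses(1))
        have xS: "x \<in> S" "y \<in> S" unfolding x_def y_def using ab assms(3)
          by (simp_all add: permutes_in_image permutes_inv)
        have "x \<noteq> y" using qx ab(3) by auto
        then consider "x < y" | "y < x" using linorder_neqE by blast
        then show "w \<in> m ` prs S"
        proof cases
          case 1
          then have "m (x,y) = w" using qx ab(3) w unfolding m_def by auto
          then show ?thesis using 1 xS unfolding prs_def by force
        next
          case 2
          then have "m (y,x) = w" using qx ab(3) w unfolding m_def by auto
          then show ?thesis using 2 xS unfolding prs_def by force
        qed
      qed
    qed
  qed
  have "eps S (p \<circ> q) = (\<Prod>z\<in>prs S. sr (q (fst z)) (q (snd z)) * g (m z))"
    unfolding eps_def by (rule prod.cong) (auto simp: pw)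
  also have "\<dots> = eps S q * (\<Prod>z\<in>prs S. g (m z))"
    unfolding eps_def by (rule prod.distrib)
  also have "(\<Prod>z\<in>prs S. g (m z)) = (\<Prod>w\<in>prs S. g w)"
    using prod.reindex_bij_betw[OF bij, of g] by simp
  also have "\<dots> = eps S p" unfolding eps_def g_def ..
  finally show ?thesis by (simp add: o_def mult.commute)
qed

lemma eps_transpose:
  assumes "finite S" "a \<in> S" "b \<in> S" "a < b"
  shows "eps S (Transposition.transpose a b) = -1"
proof -
  let ?t = "Transposition.transpose a b"
  define M where "M = {z\<in>S. a < z \<and> z < b}"
  have fM: "finite M" using assms(1) unfolding M_def by simp
  have tp: "?t permutes S" using assms by (simp add: permutes_swap_id)
  have "{(x,y). x \<in> S \<and> y \<in> S \<and> x < y \<and> ?t y < ?t x} =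
        insert (a,b) ((\<lambda>z. (a,z)) ` M \<union> (\<lambda>z. (z,b)) ` M)"
    unfolding M_def using assms(2-4)
    by (auto simp: Transposition.transpose_def split: if_splits)
  then have "ninv S ?t = card (insert (a,b) ((\<lambda>z. (a,z)) ` M \<union> (\<lambda>z. (z,b)) ` M))"
    unfolding ninv_def by simp
  also have "\<dots> = Suc (card ((\<lambda>z. (a,z)) ` M \<union> (\<lambda>z. (z,b)) ` M))"
    by (rule card_insert_disjoint) (use fM M_def in auto)
  also have "card ((\<lambda>z. (a,z)) ` M \<union> (\<lambda>z. (z,b)) ` M) = card ((\<lambda>z. (a,z)) ` M) + card ((\<lambda>z. (z,b)) ` M)"
    by (rule card_Un_disjoint) (use fM M_def in auto)
  also have "card ((\<lambda>z. (a,z)) ` M) = card M" by (rule card_image) (auto simp: inj_on_def)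
  also have "card ((\<lambda>z. (z,b)) ` M) = card M" by (rule card_image) (auto simp: inj_on_def)
  finally have "ninv S ?t = Suc (2 * card M)" by simp
  then show ?thesis using eps_ninv[OF assms(1) tp] by simp
qed

lemma sign_eps:
  assumes "p permutes S" "finite S"
  shows "sign p = eps S p"
  using assms
proof (induction rule: permutes_induct)
  case id
  have "eps S id = 1" unfolding eps_def
    by (rule prod.neutral) (auto simp: prs_def sr_def)
  then show ?case by (simp add: id_def)
next
  case (swap a b p)
  have tp: "Transposition.transpose a b permutes S" using swap by (simp add: permutes_swap_id)
  have et: "eps S (Transposition.transpose a b) = -1"
  proof (cases "a < b")
    case True then show ?thesis using eps_transpose swap assms(2) by blast
  next
    case False then have "b < a" using swap by auto
    then show ?thesis using eps_transpose swap assms(2) by (metis transpose_commute)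
  qed
  have "sign (Transposition.transpose a b \<circ> p) = sign (Transposition.transpose a b) * sign p"
    by (rule sign_compose) (use swap assms(2) in \<open>auto intro: permutes_imp_permutation permutation_swap_id\<close>)
  also have "\<dots> = - sign p" using swap by (simp add: sign_swap_id)
  finally have A: "sign (Transposition.transpose a b \<circ> p) = - sign p" .
  have B: "eps S (Transposition.transpose a b \<circ> p) = - eps S p"
    using eps_comp[OF assms(2) tp swap(4)] et by simp
  show ?case using A B swap(5) by metis
qed

lemma sign_ninv:
  assumes "p permutes S" "finite S"
  shows "sign p = (-1) ^ ninv S p"
  using sign_eps[OF assms] eps_ninv[OF assms(2,1)] by simp

lemma emap_comp: "emap \<sigma> (emap \<tau> e) = emap (\<sigma> \<circ> \<tau>) e"
  by (cases "\<tau> (fst e) \<le> \<tau> (snd e)") (auto simp: emap_def min_def max_def)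

lemma emap_id: "fst e < snd e \<Longrightarrow> emap id e = e"
  by (cases e) (auto simp: emap_def)

lemma emap_set: "{fst (emap \<sigma> e), snd (emap \<sigma> e)} = {\<sigma> (fst e), \<sigma> (snd e)}"
  by (auto simp: emap_def min_def max_def)

lemma verts_alt: "verts E = (\<Union>e\<in>E. {fst e, snd e})"
  by (auto simp: verts_def)

lemma verts_emap: "verts (emap \<sigma> ` E) = \<sigma> ` verts E"
proof -
  have "verts (emap \<sigma> ` E) = (\<Union>e\<in>E. {fst (emap \<sigma> e), snd (emap \<sigma> e)})"
    by (auto simp: verts_alt)
  also have "\<dots> = (\<Union>e\<in>E. \<sigma> ` {fst e, snd e})" by (simp only: emap_set image_insert image_empty)
  also have "\<dots> = \<sigma> ` verts E" by (auto simp: verts_alt)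
  finally show ?thesis .
qed

lemma edges_verts: "T \<subseteq> edges n \<Longrightarrow> verts T \<subseteq> {1..n}"
  by (auto simp: verts_def edges_def)

lemma verts_edges: "simple_edges S \<Longrightarrow> verts S \<subseteq> {1..n} \<Longrightarrow> S \<subseteq> edges n"
  by (fastforce simp: verts_def edges_def simple_edges_def)

lemma edges_simple: "T \<subseteq> edges n \<Longrightarrow> simple_edges T"
proof -
  assume a: "T \<subseteq> edges n"
  have "edges n \<subseteq> {1..n} \<times> {1..n}" by (auto simp: edges_def)
  then have "finite T" using a by (meson finite_SigmaI finite_atLeastAtMost finite_subset)
  then show ?thesis using a by (auto simp: simple_edges_def edges_def)
qed

lemma finite_edges: "finite (edges n)"
proof -
  have "edges n \<subseteq> {1..n} \<times> {1..n}" by (auto simp: edges_def)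
  then show ?thesis by (meson finite_SigmaI finite_atLeastAtMost finite_subset)
qed

lemma edges_mono: "m \<le> n \<Longrightarrow> edges m \<subseteq> edges n"
  by (auto simp: edges_def)

lemma emap_edges: "\<sigma> permutes {1..n} \<Longrightarrow> e \<in> edges n \<Longrightarrow> emap \<sigma> e \<in> edges n"
proof -
  assume p: "\<sigma> permutes {1..n}" and e: "e \<in> edges n"
  obtain a b where ab: "e = (a,b)" "1 \<le> a" "a < b" "b \<le> n" using e by (auto simp: edges_def)
  have "\<sigma> a \<noteq> \<sigma> b" using permutes_inj[OF p] ab(3) by (simp add: inj_eq)
  moreover have "a \<in> {1..n}" "b \<in> {1..n}" using ab by auto
  then have "\<sigma> a \<in> {1..n}" "\<sigma> b \<in> {1..n}" by (simp_all only: permutes_in_image[OF p])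
  note calculation = calculation this
  ultimately show ?thesis unfolding ab(1) by (auto simp: emap_def edges_def min_def max_def)
qed

lemma emap_inj: "inj \<sigma> \<Longrightarrow> inj_on (emap \<sigma>) {e. fst e < snd e}"
proof (rule inj_onI)
  fix e e' assume i: "inj \<sigma>" and e: "e \<in> {e. fst e < snd e}" and e': "e' \<in> {e. fst e < snd e}"
    and eq: "emap \<sigma> e = emap \<sigma> e'"
  have "\<sigma> ` {fst e, snd e} = \<sigma> ` {fst e', snd e'}" using emap_set[of \<sigma> e] emap_set[of \<sigma> e'] eq by simp
  then have "{fst e, snd e} = {fst e', snd e'}" using i by (metis inj_image_eq_iff)
  then show "e = e'" using e e' by (cases e, cases e') (auto simp: doubleton_eq_iff)
qed

lemma simple_lt: "simple_edges E \<Longrightarrow> E \<subseteq> {e. fst e < snd e}"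
  by (auto simp: simple_edges_def)

lemma perm_fix:
  assumes "\<sigma> permutes {1..Suc n}" "\<sigma> ` {1..n} \<subseteq> {1..n}"
  shows "\<sigma> permutes {1..n}"
proof (rule bij_imp_permutes)
  have i: "inj \<sigma>" using permutes_inj[OF assms(1)] .
  have im: "\<sigma> ` {1..n} = {1..n}"
    using assms(2) i by (meson endo_inj_surj finite_atLeastAtMost inj_on_subset subset_UNIV)
  then show "bij_betw \<sigma> {1..n} {1..n}" unfolding bij_betw_def using inj_on_subset[OF i] by blast
  have "\<sigma> (Suc n) = Suc n"
  proof (rule ccontr)
    assume ne: "\<sigma> (Suc n) \<noteq> Suc n"
    have "Suc n \<in> {1..Suc n}" by simp
    then have "\<sigma> (Suc n) \<in> {1..Suc n}" by (simp only: permutes_in_image[OF assms(1)])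
    then have "\<sigma> (Suc n) \<in> {1..n}" using ne by auto
    then obtain k where "k \<in> {1..n}" "\<sigma> k = \<sigma> (Suc n)" using im by (metis imageE)
    then show False using i by (auto simp: inj_eq)
  qed
  then show "\<sigma> x = x" if "x \<notin> {1..n}" for x
    using that permutes_not_in[OF assms(1)] by (cases "x = Suc n") auto
qed

lemma edge_perm_permutes:
  assumes "inj \<sigma>" "emap \<sigma> ` E = E" "simple_edges E"
  shows "edge_perm \<sigma> E permutes E"
proof (rule bij_imp_permutes)
  have "inj_on (emap \<sigma>) E" using emap_inj[OF assms(1)] simple_lt[OF assms(3)] inj_on_subset by blast
  then have "bij_betw (emap \<sigma>) E E" using assms(2) by (simp add: bij_betw_def)
  then show "bij_betw (edge_perm \<sigma> E) E E"
    by (rule bij_betw_cong[THEN iffD1, rotated]) (simp add: edge_perm_def)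
  show "edge_perm \<sigma> E x = x" if "x \<notin> E" for x using that by (simp add: edge_perm_def)
qed

lemma stab_finite: "finite (stab n S)"
  unfolding stab_def perms_def by (rule finite_subset[OF _ finite_permutations[of "{1..n}"]]) auto

lemma perms_finite: "finite (perms n)"
  unfolding perms_def by (rule finite_permutations) simp

lemma act_coeff_one:
  assumes "skew_invariant N G" "\<sigma> \<in> stab N G"
  shows "act_coeff \<sigma> G = 1"
proof -
  have Ge: "G \<subseteq> edges N" using assms(1) by (simp add: skew_invariant_def)
  have sG: "simple_edges G" using edges_simple[OF Ge] .
  have sp: "\<sigma> permutes {1..N}" "emap \<sigma> ` G = G" using assms(2) by (auto simp: stab_def perms_def)
  let ?p = "edge_perm \<sigma> G"
  have pp: "?p permutes G" using edge_perm_permutes[OF permutes_inj[OF sp(1)] sp(2) sG] .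
  have fG: "finite G" using sG by (simp add: simple_edges_def)
  have lx: "\<And>e e'. lexless e e' = (e < e')" by (auto simp: lexless_def less_prod_def)
  have "{(e,e'). e \<in> G \<and> e' \<in> G \<and> lexless e e' \<and> lexless (emap \<sigma> e') (emap \<sigma> e)} =
        {(x,y). x \<in> G \<and> y \<in> G \<and> x < y \<and> ?p y < ?p x}"
    unfolding lx by (auto simp: edge_perm_def)
  then have "inversions \<sigma> G = ninv G ?p"
    unfolding inversions_def ninv_def by simp
  then have "sign ?p = (-1) ^ inversions \<sigma> G" using sign_ninv[OF pp fG] by simp
  moreover have "sign \<sigma> * sign ?p = 1" using assms by (simp add: skew_invariant_def)
  ultimately have "sign \<sigma> * (-1) ^ inversions \<sigma> G = 1" by simp
  then have "(of_int (sign \<sigma> * (-1) ^ inversions \<sigma> G) :: rat) = 1" by simp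
  then show ?thesis unfolding act_coeff_def by simp
qed

lemma alpha_diag:
  assumes "skew_invariant N G"
  shows "alpha N G G = 1"
proof -
  have "(\<Sum>\<sigma>\<in>perms N. if emap \<sigma> ` G = G then act_coeff \<sigma> G else 0) = (\<Sum>\<sigma>\<in>stab N G. act_coeff \<sigma> G)"
    unfolding stab_def by (rule sum.inter_filter[OF perms_finite, symmetric])
  also have "\<dots> = (\<Sum>\<sigma>\<in>stab N G. 1)" using act_coeff_one[OF assms] by simp
  also have "\<dots> = of_nat (card (stab N G))" by simp
  finally have s: "(\<Sum>\<sigma>\<in>perms N. if emap \<sigma> ` G = G then act_coeff \<sigma> G else 0) = of_nat (card (stab N G))" .
  have "id \<in> stab N G"
  proof -
    have "G \<subseteq> {e. fst e < snd e}" using assms by (auto simp: skew_invariant_def edges_def)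
    then have "emap id ` G = id ` G" by (intro image_cong) (auto intro: emap_id)
    then have "emap id ` G = G" by simp
    then show ?thesis by (simp add: stab_def perms_def permutes_id)
  qed
  then have "card (stab N G) \<noteq> 0" using stab_finite by (metis card_0_eq empty_iff)
  then show ?thesis unfolding alpha_def s by simp
qed

lemma alpha_support:
  assumes "alpha N G T \<noteq> 0"
  shows "\<exists>\<sigma>\<in>perms N. emap \<sigma> ` G = T"
proof (rule ccontr)
  assume "\<not> ?thesis"
  then have "(\<Sum>\<sigma>\<in>perms N. if emap \<sigma> ` G = T then act_coeff \<sigma> G else 0) = 0"
    by (intro sum.neutral) auto
  then show False using assms by (simp add: alpha_def)
qed

lemma alpha_vanish:
  assumes "verts S = {1..Suc n}" "T \<subseteq> edges n"
  shows "alpha (Suc n) S T = 0"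
proof -
  have "(\<Sum>\<sigma>\<in>perms (Suc n). if emap \<sigma> ` S = T then act_coeff \<sigma> S else 0) = 0"
  proof (rule sum.neutral, rule ballI)
    fix \<sigma> assume "\<sigma> \<in> perms (Suc n)"
    then have p: "\<sigma> permutes {1..Suc n}" by (simp add: perms_def)
    show "(if emap \<sigma> ` S = T then act_coeff \<sigma> S else 0) = 0"
    proof (cases "emap \<sigma> ` S = T")
      case True
      then have "verts T = \<sigma> ` {1..Suc n}" using verts_emap[of \<sigma> S] assms(1) by simp
      also have "\<dots> = {1..Suc n}" by (rule permutes_image[OF p])
      finally have "Suc n \<in> verts T" by simp
      then show ?thesis using edges_verts[OF assms(2)] by auto
    qed simp
  qed
  then show ?thesis by (simp add: alpha_def)
qed

lemma perms_mono: "perms n \<subseteq> perms (Suc n)"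
  unfolding perms_def using permutes_subset[of _ "{1..n}" "{1..Suc n}"] by auto

lemma stab_eq:
  assumes "simple_edges S" "verts S = {1..n}"
  shows "stab (Suc n) S = stab n S"
proof
  show "stab n S \<subseteq> stab (Suc n) S" unfolding stab_def using perms_mono by auto
  show "stab (Suc n) S \<subseteq> stab n S"
  proof
    fix \<sigma> assume "\<sigma> \<in> stab (Suc n) S"
    then have p: "\<sigma> permutes {1..Suc n}" and e: "emap \<sigma> ` S = S" by (auto simp: stab_def perms_def)
    have "\<sigma> ` {1..n} = {1..n}" using verts_emap[of \<sigma> S] e assms(2) by simp
    then have "\<sigma> permutes {1..n}" using perm_fix[OF p] by simp
    then show "\<sigma> \<in> stab n S" using e by (simp add: stab_def perms_def)
  qed
qed

lemma alpha_res:
  assumes "simple_edges S" "verts S = {1..n}"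
  shows "res n (alpha (Suc n) S) = alpha n S"
proof
  fix T
  have Se: "S \<subseteq> edges n" using verts_edges[OF assms(1)] assms(2) by simp
  show "res n (alpha (Suc n) S) T = alpha n S T"
  proof (cases "T \<subseteq> edges n")
    case True
    have "(\<Sum>\<sigma>\<in>perms (Suc n). if emap \<sigma> ` S = T then act_coeff \<sigma> S else 0) =
          (\<Sum>\<sigma>\<in>perms n. if emap \<sigma> ` S = T then act_coeff \<sigma> S else 0)"
    proof (rule sum.mono_neutral_right[OF perms_finite perms_mono], rule ballI)
      fix \<sigma> assume s: "\<sigma> \<in> perms (Suc n) - perms n"
      then have p: "\<sigma> permutes {1..Suc n}" by (simp add: perms_def)
      show "(if emap \<sigma> ` S = T then act_coeff \<sigma> S else 0) = 0"
      proof (cases "emap \<sigma> ` S = T")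
        case True2: True
        have "\<sigma> ` {1..n} = verts T" using verts_emap[of \<sigma> S] True2 assms(2) by simp
        then have "\<sigma> ` {1..n} \<subseteq> {1..n}" using edges_verts[OF True] by simp
        then have "\<sigma> permutes {1..n}" using perm_fix[OF p] by simp
        then show ?thesis using s by (simp add: perms_def)
      qed simp
    qed
    then show ?thesis using True by (simp add: res_def alpha_def stab_eq[OF assms])
  next
    case False
    have "(\<Sum>\<sigma>\<in>perms n. if emap \<sigma> ` S = T then act_coeff \<sigma> S else 0) = 0"
    proof (rule sum.neutral, rule ballI)
      fix \<sigma> assume "\<sigma> \<in> perms n"
      then have p: "\<sigma> permutes {1..n}" by (simp add: perms_def)
      have "emap \<sigma> ` S \<subseteq> edges n" using emap_edges[OF p] Se by auto
      then show "(if emap \<sigma> ` S = T then act_coeff \<sigma> S else 0) = 0" using False by auto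
    qed
    then show ?thesis using False by (simp add: res_def alpha_def)
  qed
qed

lemma skew_transfer:
  assumes E: "skew_invariant (Suc n) E" "card (verts E) = n"
  and F: "simple_edges F" "verts F = {1..n}" "bij_betw f (verts E) (verts F)" "emap f ` E = F"
  shows "skew_invariant n F"
proof -
  have Ee: "E \<subseteq> edges (Suc n)" using E(1) by (simp add: skew_invariant_def)
  have sE: "simple_edges E" using edges_simple[OF Ee] .
  have finE: "finite E" using sE by (simp add: simple_edges_def)
  have vE: "verts E \<subseteq> {1..Suc n}" using edges_verts[OF Ee] .
  have fin: "finite (verts E)" using vE finite_subset by blast
  have "card ({1..Suc n} - verts E) = 1" using card_Diff_subset[OF fin vE] E(2) by simp
  then obtain w where w: "{1..Suc n} - verts E = {w}" using card_1_singletonE by blast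
  have wE: "w \<notin> verts E" "w \<in> {1..Suc n}" using w by auto
  define g where "g = (\<lambda>x. if x \<in> verts E then f x else if x = w then Suc n else x)"
  have gp: "g permutes {1..Suc n}"
  proof (rule bij_imp_permutes)
    have "bij_betw g (verts E) {1..n} = bij_betw f (verts E) {1..n}"
      by (rule bij_betw_cong) (simp add: g_def)
    then have b1: "bij_betw g (verts E) {1..n}" using F(2,3) by simp
    have b2: "bij_betw g {w} {Suc n}" using wE by (simp add: g_def bij_betw_def)
    have "bij_betw g (verts E \<union> {w}) ({1..n} \<union> {Suc n})" by (rule bij_betw_combine[OF b1 b2]) auto
    moreover have "verts E \<union> {w} = {1..Suc n}" using w vE by auto
    moreover have "{1..n} \<union> {Suc n} = {1..Suc n}" by auto
    ultimately show "bij_betw g {1..Suc n} {1..Suc n}" by simp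
    show "g x = x" if "x \<notin> {1..Suc n}" for x using that vE wE by (auto simp: g_def)
  qed
  have gE: "emap g ` E = F"
  proof -
    have "emap g e = emap f e" if "e \<in> E" for e
    proof -
      have "fst e \<in> verts E" "snd e \<in> verts E" using that by (auto simp: verts_def)
      then show ?thesis by (simp add: emap_def g_def)
    qed
    then show ?thesis using F(4) by (metis image_cong)
  qed
  have Elt: "E \<subseteq> {e. fst e < snd e}" using simple_lt[OF sE] .
  have ig: "inj g" using permutes_inj[OF gp] .
  have injg: "inj_on (emap g) E" using emap_inj[OF ig] Elt inj_on_subset by blast
  have gig: "g \<circ> inv g = id" "inv g \<circ> g = id" using permutes_inv_o[OF gp] by auto
  have Fe: "F \<subseteq> edges n" using verts_edges[OF F(1)] F(2) by simp
  show ?thesis unfolding skew_invariant_def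
  proof (intro conjI ballI Fe)
    fix \<sigma> assume sF: "\<sigma> \<in> stab n F"
    then have sp: "\<sigma> permutes {1..n}" and sF': "emap \<sigma> ` F = F" by (auto simp: stab_def perms_def)
    have sp': "\<sigma> permutes {1..Suc n}" using permutes_subset[OF sp] by auto
    define \<tau> where "\<tau> = inv g \<circ> (\<sigma> \<circ> g)"
    have tp: "\<tau> permutes {1..Suc n}" unfolding \<tau>_def
      by (intro permutes_compose permutes_inv gp sp')
    have gt: "g \<circ> \<tau> = \<sigma> \<circ> g" unfolding \<tau>_def by (simp add: o_assoc gig)
    have inv_back: "emap (inv g) (emap g e) = e" if "e \<in> E" for e
      using that Elt by (simp add: emap_comp gig emap_id subset_iff)
    have tE: "emap \<tau> ` E = E"
    proof -
      have "emap \<tau> ` E = emap (inv g) ` emap \<sigma> ` emap g ` E"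
        by (simp add: image_image emap_comp \<tau>_def o_assoc)
      also have "\<dots> = emap (inv g) ` emap g ` E" using gE sF' by simp
      also have "\<dots> = E" using inv_back by (simp add: image_image)
      finally show ?thesis .
    qed
    have tst: "\<tau> \<in> stab (Suc n) E" using tp tE by (simp add: stab_def perms_def)
    then have skE: "sign \<tau> * sign (edge_perm \<tau> E) = 1" using E(1) by (simp add: skew_invariant_def)
    have pg: "permutation g" using permutes_imp_permutation[OF _ gp] by simp
    have ps: "permutation \<sigma>" using permutes_imp_permutation[OF _ sp] by simp
    have "sign \<tau> = sign (inv g) * (sign \<sigma> * sign g)" unfolding \<tau>_def
      by (simp add: sign_compose permutation_compose permutation_inverse pg ps)
    also have "\<dots> = sign \<sigma>" using sign_inverse[OF pg] by (simp add: algebra_simps)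
    finally have s1: "sign \<tau> = sign \<sigma>" .
    have ep: "edge_perm \<tau> E permutes E" using edge_perm_permutes[OF permutes_inj[OF tp] tE sE] .
    have "map_permutation E (emap g) (edge_perm \<tau> E) = edge_perm \<sigma> F"
    proof
      fix x
      show "map_permutation E (emap g) (edge_perm \<tau> E) x = edge_perm \<sigma> F x"
      proof (cases "x \<in> F")
        case True
        then obtain e where e: "e \<in> E" "x = emap g e" using gE by auto
        have ie: "inv_into E (emap g) x = e" using e injg by (simp add: inv_into_f_f)
        have "emap g (emap \<tau> e) = emap \<sigma> x" using e(2) gt by (simp add: emap_comp)
        then show ?thesis using True e ie gE
          by (simp add: map_permutation_def restrict_id_def edge_perm_def)
      next
        case False
        then show ?thesis using gE by (simp add: map_permutation_def restrict_id_def edge_perm_def)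
      qed
    qed
    then have s2: "sign (edge_perm \<sigma> F) = sign (edge_perm \<tau> E)"
      using sign_map_permutation[OF injg ep finE] by simp
    show "sign \<sigma> * sign (edge_perm \<sigma> F) = 1" using skE s1 s2 by simp
  qed
qed

lemma rep_idem:
  assumes "coherent_rep rep" "simple_edges E"
  shows "rep (rep E) = rep E" "simple_edges (rep E)" "verts (rep E) = {1..card (verts E)}"
    "iso_graphs E (rep E)"
  using assms unfolding coherent_rep_def by blast+

lemma orbit_unique:
  assumes cr: "coherent_rep rep" and s1: "simple_edges E1" and s2: "simple_edges E2"
    and sp: "\<sigma> permutes {1..N}" and tp: "\<tau> permutes {1..N}"
    and eq: "emap \<sigma> ` rep E1 = emap \<tau> ` rep E2"
  shows "rep E1 = rep E2"
proof -
  let ?G = "rep E1" and ?H = "rep E2"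
  have sG: "simple_edges ?G" and sH: "simple_edges ?H" using rep_idem cr s1 s2 by blast+
  define f where "f = inv \<tau> \<circ> \<sigma>"
  have tinv: "inv \<tau> \<circ> \<tau> = id" using permutes_inv_o[OF tp] by auto
  have "emap f ` ?G = emap (inv \<tau>) ` emap \<sigma> ` ?G" by (simp add: image_image emap_comp f_def)
  also have "\<dots> = emap (inv \<tau>) ` emap \<tau> ` ?H" using eq by simp
  also have "\<dots> = ?H"
  proof -
    have "emap (inv \<tau>) (emap \<tau> e) = e" if "e \<in> ?H" for e
      using that simple_lt[OF sH] by (simp add: emap_comp tinv emap_id subset_iff)
    then show ?thesis by (simp add: image_image)
  qed
  finally have fG: "emap f ` ?G = ?H" .
  have fi: "inj f" unfolding f_def
    using permutes_inj[OF permutes_inv[OF tp]] permutes_inj[OF sp] by (simp add: inj_compose)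
  have "f ` verts ?G = verts ?H" using verts_emap[of f ?G] fG by simp
  then have "bij_betw f (verts ?G) (verts ?H)" using inj_on_subset[OF fi subset_UNIV] by (simp add: bij_betw_def)
  then have iso: "iso_graphs ?G ?H" using fG unfolding iso_graphs_def by blast
  have "rep ?H = rep ?G" using cr sG sH iso unfolding coherent_rep_def by blast
  then show ?thesis using rep_idem(1)[OF cr s1] rep_idem(1)[OF cr s2] by simp
qed

theorem proposition2p22:
  fixes n :: nat and rep :: "(nat \<times> nat) set \<Rightarrow> (nat \<times> nat) set"
  assumes "n \<ge> 1" and "coherent_rep rep"
  shows "(\<forall>E. skew_invariant (Suc n) E \<and> card (verts E) = n \<longrightarrow>
            skew_invariant n (rep E) \<and>
            res n (alpha (Suc n) (rep E)) = alpha n (rep E))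
       \<and> (\<forall>E. skew_invariant (Suc n) E \<and> card (verts E) = Suc n \<longrightarrow>
            res n (alpha (Suc n) (rep E)) = (\<lambda>T. 0))
       \<and> (\<forall>c :: (nat \<times> nat) set \<Rightarrow> rat.
            let R = rep ` {E. skew_invariant (Suc n) E \<and> card (verts E) = n};
                v = (\<lambda>T. \<Sum>G\<in>R. c G * alpha (Suc n) G T)
            in res n v = (\<lambda>T. 0) \<longrightarrow> v = (\<lambda>T. 0))"
proof -
  note cr = assms(2)
  have P1: "skew_invariant n (rep E) \<and> res n (alpha (Suc n) (rep E)) = alpha n (rep E)
      \<and> simple_edges (rep E) \<and> verts (rep E) = {1..n}"
    if E: "skew_invariant (Suc n) E" "card (verts E) = n" for E
  proof -
    have Ee: "E \<subseteq> edges (Suc n)" using E(1) by (simp add: skew_invariant_def)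
    have sE: "simple_edges E" using edges_simple[OF Ee] .
    have sR: "simple_edges (rep E)" and vR: "verts (rep E) = {1..n}" and iso: "iso_graphs E (rep E)"
      using rep_idem[OF cr sE] E(2) by auto
    obtain f where f: "bij_betw f (verts E) (verts (rep E))" "emap f ` E = rep E"
      using iso unfolding iso_graphs_def by blast
    have "skew_invariant n (rep E)" by (rule skew_transfer[OF E sR vR f])
    then show ?thesis using alpha_res[OF sR vR] sR vR by simp
  qed
  have P2: "res n (alpha (Suc n) (rep E)) = (\<lambda>T. 0)"
    if E: "skew_invariant (Suc n) E" "card (verts E) = Suc n" for E
  proof
    fix T
    have Ee: "E \<subseteq> edges (Suc n)" using E(1) by (simp add: skew_invariant_def)
    have sE: "simple_edges E" using edges_simple[OF Ee] .
    have vR: "verts (rep E) = {1..Suc n}" using rep_idem[OF cr sE] E(2) by auto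
    show "res n (alpha (Suc n) (rep E)) T = 0"
      using alpha_vanish[OF vR] by (simp add: res_def)
  qed
  have P3: "res n v = (\<lambda>T. 0) \<longrightarrow> v = (\<lambda>T. 0)"
    if R: "R = rep ` {E. skew_invariant (Suc n) E \<and> card (verts E) = n}"
    and v: "v = (\<lambda>T. \<Sum>G\<in>R. c G * alpha (Suc n) G T)" for c :: "(nat \<times> nat) set \<Rightarrow> rat" and R v
  proof
    assume r0: "res n v = (\<lambda>T. 0)"
    have finR: "finite R"
    proof -
      have "{E. skew_invariant (Suc n) E \<and> card (verts E) = n} \<subseteq> Pow (edges (Suc n))"
        by (auto simp: skew_invariant_def)
      then have "finite {E. skew_invariant (Suc n) E \<and> card (verts E) = n}"
        using finite_edges finite_subset by blast
      then show ?thesis unfolding R by simp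
    qed
    have Rprops: "\<exists>E. G = rep E \<and> simple_edges E \<and> skew_invariant n G \<and> simple_edges G \<and> verts G = {1..n}"
      if GR: "G \<in> R" for G
    proof -
      obtain E where E: "G = rep E" "skew_invariant (Suc n) E" "card (verts E) = n" using GR R by auto
      have Ee: "E \<subseteq> edges (Suc n)" using E(2) by (simp add: skew_invariant_def)
      show ?thesis using P1[OF E(2,3)] edges_simple[OF Ee] E(1) by blast
    qed
    have c0: "c G = 0" if G: "G \<in> R" for G
    proof -
      obtain E where E: "G = rep E" "simple_edges E" and sk: "skew_invariant n G"
        and sG: "simple_edges G" and vG: "verts G = {1..n}" using Rprops[OF G] by blast
      have Ge: "G \<subseteq> edges n" using verts_edges[OF sG] vG by simp
      have sk1: "skew_invariant (Suc n) G"
      proof -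
        have "G \<subseteq> edges (Suc n)" using Ge edges_mono[of n "Suc n"] by auto
        then show ?thesis using sk stab_eq[OF sG vG] by (simp add: skew_invariant_def)
      qed
      have one: "alpha (Suc n) G G = 1" using alpha_diag[OF sk1] .
      have others: "c G' * alpha (Suc n) G' G = (if G' = G then c G else 0)" if G': "G' \<in> R" for G'
      proof (cases "G' = G")
        case True then show ?thesis using one by simp
      next
        case False
        have "alpha (Suc n) G' G = 0"
        proof (rule ccontr)
          assume "alpha (Suc n) G' G \<noteq> 0"
          then obtain \<sigma> where s: "\<sigma> \<in> perms (Suc n)" "emap \<sigma> ` G' = G" using alpha_support by blast
          obtain E' where E': "G' = rep E'" "simple_edges E'" using Rprops[OF G'] by blast
          have "emap id ` G = G"
          proof -
            have "emap id ` G = id ` G" using simple_lt[OF sG] by (intro image_cong) (auto intro: emap_id)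
            then show ?thesis by simp
          qed
          then have "emap \<sigma> ` rep E' = emap id ` rep E" using s(2) E E' by simp
          moreover have "\<sigma> permutes {1..Suc n}" using s(1) by (simp add: perms_def)
          moreover have "id permutes {1..Suc n}" by (rule permutes_id)
          ultimately have "rep E' = rep E"
            using orbit_unique[OF cr E'(2) E(2)] by blast
          then show False using False E E' by simp
        qed
        then show ?thesis using False by simp
      qed
      have "res n v G = v G" using Ge by (simp add: res_def)
      also have "\<dots> = (\<Sum>G'\<in>R. (if G' = G then c G else 0))" unfolding v
        by (rule sum.cong) (auto simp: others)
      also have "\<dots> = c G" using finR G by simp
      finally show ?thesis using r0 by simp
    qed
    show "v = (\<lambda>T. 0)" unfolding v using c0 by (intro ext sum.neutral) auto
  qed
  show ?thesis using P1 P2 P3 by (auto simp: Let_def)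
qed

end
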